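(* For spans $A\leftarrow M\to B$ and $B\leftarrow N\to C$, regarded as linear bicomodules $M\mathcal y\colon A\mathcal y\Leftarrow B\mathcal y$ and $N\mathcal y\colon B\mathcal y\Leftarrow C\mathcal y$, there is an isomorphism of $(A\mathcal y,C\mathcal y)$-bicomodules $$(M\mathcal y)^\vee\triangleleft_{B\mathcal y}(N\mathcal y)^\vee\;\cong\;\big(M\mathcal y\triangleleft_{B\mathcal y}N\mathcal y\big)^\vee.$$
   Context: $C\mathcal y$ is the discrete category (comonoid in $(\mathbf{Poly},\mathcal y,\triangleleft)$) on a set $C$; bicomodules between discrete categories with linear carrier are spans, and $\triangleleft_{B\mathcal y}$ (bicomodule composition, an equalizer in $\mathbf{Poly}$) corresponds on spans to composition by pullback. For a span $C\xleftarrow{f}M\xrightarrow{g}D$ with fibers $M_a$ over $a\in C$, the dual is the conjunctive bicomodule $(M\mathcal y)^\vee\cong\sum_{a\in C}\mathcal y^{M_a}$ (defined as $[M\mathcal y,\bot]$ for the local internal hom and the terminal span $\bot$), whose prafunctor $D\text{-}\mathbf{Set}\to C\text{-}\mathbf{Set}$ is $\Pi_f\Delta_g$. *)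

theory Defs
  imports "HOL-Library.FuncSet"
begin

text \<open>Concrete model of bicomodules between discrete categories A y and B y
(A, B sets). Such a bicomodule is a polynomial  sum over positions p of y^(dir p),
together with a label lbl p in A of each position (left coaction) and a label
rl p e in B of each direction e at p (right coaction).\<close>

record ('p, 'e, 'a, 'b) bicom =
  pos :: "'p set"
  lbl :: "'p \<Rightarrow> 'a"
  dir :: "'p \<Rightarrow> 'e set"
  rl  :: "'p \<Rightarrow> 'e \<Rightarrow> 'b"

definition bicom_on :: "'a set \<Rightarrow> 'b set \<Rightarrow> ('p, 'e, 'a, 'b) bicom \<Rightarrow> bool" where
  "bicom_on A B P \<longleftrightarrow> lbl P \<in> pos P \<rightarrow> A \<and> (\<forall>p\<in>pos P. rl P p \<in> dir P p \<rightarrow> B)"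

text \<open>Composition over the middle discrete comonoid (the equalizer in Poly):
a position is a position i of P together with, for each direction e of i,
a position of Q whose left label equals the right label of e.\<close>

definition bicom_comp ::
  "('p, 'e, 'a, 'b) bicom \<Rightarrow> ('q, 'd, 'b, 'c) bicom \<Rightarrow> ('p \<times> ('e \<Rightarrow> 'q), 'e \<times> 'd, 'a, 'c) bicom" where
  "bicom_comp P Q = \<lparr> pos = {(i, h). i \<in> pos P \<and>
                              h \<in> (\<Pi>\<^sub>E e\<in>dir P i. {j \<in> pos Q. lbl Q j = rl P i e})},
                      lbl = (\<lambda>(i, h). lbl P i),
                      dir = (\<lambda>(i, h). Sigma (dir P i) (\<lambda>e. dir Q (h e))),
                      rl = (\<lambda>(i, h) (e, d). rl Q (h e) d) \<rparr>"

text \<open>Isomorphism of (A y, C y)-bicomodules: bijection on positions preserving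
left labels, and for each position a bijection of directions (going backwards,
as in Poly) preserving right labels.\<close>

definition bicom_iso :: "('p, 'e, 'a, 'b) bicom \<Rightarrow> ('q, 'd, 'a, 'b) bicom \<Rightarrow> bool" where
  "bicom_iso P Q \<longleftrightarrow> (\<exists>\<phi> \<psi>. bij_betw \<phi> (pos P) (pos Q) \<and>
      (\<forall>p\<in>pos P. lbl Q (\<phi> p) = lbl P p \<and>
                 bij_betw (\<psi> p) (dir Q (\<phi> p)) (dir P p) \<and>
                 (\<forall>d\<in>dir Q (\<phi> p). rl P p (\<psi> p d) = rl Q (\<phi> p) d)))"

definition lin_bicom :: "'m set \<Rightarrow> ('m \<Rightarrow> 'a) \<Rightarrow> ('m \<Rightarrow> 'b) \<Rightarrow> ('m, unit, 'a, 'b) bicom" where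
  "lin_bicom M f g = \<lparr> pos = M, lbl = f, dir = (\<lambda>_. {()}), rl = (\<lambda>m _. g m) \<rparr>"

definition is_span :: "'a set \<Rightarrow> 'b set \<Rightarrow> 'm set \<Rightarrow> ('m \<Rightarrow> 'a) \<Rightarrow> ('m \<Rightarrow> 'b) \<Rightarrow> bool" where
  "is_span A B M f g \<longleftrightarrow> f \<in> M \<rightarrow> A \<and> g \<in> M \<rightarrow> B"

text \<open>The dual (conjunctive bicomodule) of a linear bicomodule P : A y <= B y,
i.e. of the span A <-lbl- pos P -g-> B with g p the right label of the unique
direction at p:  (P)^dual = sum over a in A of y^(fiber over a).\<close>

definition lin_dual :: "'a set \<Rightarrow> ('p, 'e, 'a, 'b) bicom \<Rightarrow> ('a, 'p, 'a, 'b) bicom" where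
  "lin_dual A P = \<lparr> pos = A, lbl = id, dir = (\<lambda>a. {p \<in> pos P. lbl P p = a}),
                    rl = (\<lambda>a p. rl P p (THE e. e \<in> dir P p)) \<rparr>"

end

theory Submission
  imports Defs
begin

theorem proposition2p55:
  fixes A :: "'a set" and B :: "'b set" and C :: "'c set"
    and M :: "'m set" and f :: "'m \<Rightarrow> 'a" and g :: "'m \<Rightarrow> 'b"
    and N :: "'n set" and f' :: "'n \<Rightarrow> 'b" and g' :: "'n \<Rightarrow> 'c"
  assumes "is_span A B M f g" and "is_span B C N f' g'"
  shows "bicom_iso
           (bicom_comp (lin_dual A (lin_bicom M f g)) (lin_dual B (lin_bicom N f' g')))
           (lin_dual A (bicom_comp (lin_bicom M f g) (lin_bicom N f' g')))"
proof -
  have gB: "\<And>m. m \<in> M \<Longrightarrow> g m \<in> B" using assms(1) unfolding is_span_def by auto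
  let ?L = "bicom_comp (lin_dual A (lin_bicom M f g)) (lin_dual B (lin_bicom N f' g'))"
  let ?R = "lin_dual A (bicom_comp (lin_bicom M f g) (lin_bicom N f' g'))"
  have posL: "pos ?L = {(a, h). a \<in> A \<and> h = restrict g {m \<in> M. f m = a}}"
    using gB by (auto simp: bicom_comp_def lin_dual_def lin_bicom_def PiE_def Pi_def extensional_def)
  have posR: "pos ?R = A" by (simp add: lin_dual_def)
  have bij: "bij_betw fst (pos ?L) (pos ?R)"
    unfolding posL posR by (auto simp: bij_betw_def inj_on_def image_def)
  have dirL: "\<And>a h. (a,h) \<in> pos ?L \<Longrightarrow> dir ?L (a,h) = {(m,n). m \<in> M \<and> f m = a \<and> n \<in> N \<and> f' n = g m}"
    unfolding posL by (auto simp: bicom_comp_def lin_dual_def lin_bicom_def)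
  have dirR: "\<And>a. dir ?R a = {(m,k). m \<in> M \<and> f m = a \<and> k \<in> (\<Pi>\<^sub>E e\<in>{()}. {n \<in> N. f' n = g m})}"
    by (auto simp: bicom_comp_def lin_dual_def lin_bicom_def)
  show ?thesis
    unfolding bicom_iso_def
  proof (intro exI conjI ballI)
    show "bij_betw fst (pos ?L) (pos ?R)" by (rule bij)
  next
    fix p assume p: "p \<in> pos ?L"
    obtain a h where ah: "p = (a,h)" by (cases p)
    show "lbl ?R (fst p) = lbl ?L p"
      using ah by (simp add: bicom_comp_def lin_dual_def lin_bicom_def)
    show "bij_betw (\<lambda>(m,k). (m, k ())) (dir ?R (fst p)) (dir ?L p)"
      unfolding bij_betw_def
    proof
      show "inj_on (\<lambda>(m,k). (m, k ())) (dir ?R (fst p))"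
        unfolding dirR by (auto simp: inj_on_def PiE_def extensional_def fun_eq_iff)
      show "(\<lambda>(m,k). (m, k ())) ` dir ?R (fst p) = dir ?L p"
        unfolding ah dirL[OF p[unfolded ah]] dirR fst_conv
      proof (rule set_eqI, rule iffI)
        fix x assume "x \<in> (\<lambda>(m,k). (m, k ())) ` {(m,k). m \<in> M \<and> f m = a \<and> k \<in> (\<Pi>\<^sub>E e\<in>{()}. {n \<in> N. f' n = g m})}"
        then show "x \<in> {(m,n). m \<in> M \<and> f m = a \<and> n \<in> N \<and> f' n = g m}" by auto
      next
        fix x assume x: "x \<in> {(m,n). m \<in> M \<and> f m = a \<and> n \<in> N \<and> f' n = g m}"
        obtain m n where mn: "x = (m,n)" by (cases x)
        have "(m, \<lambda>_\<in>{()}. n) \<in> {(m,k). m \<in> M \<and> f m = a \<and> k \<in> (\<Pi>\<^sub>E e\<in>{()}. {n \<in> N. f' n = g m})}"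
          using x mn by auto
        then show "x \<in> (\<lambda>(m,k). (m, k ())) ` {(m,k). m \<in> M \<and> f m = a \<and> k \<in> (\<Pi>\<^sub>E e\<in>{()}. {n \<in> N. f' n = g m})}"
          using mn by (auto intro!: image_eqI[where x="(m, \<lambda>_\<in>{()}. n)"])
      qed
    qed
  next
    fix p d assume p: "p \<in> pos ?L" and d: "d \<in> dir ?R (fst p)"
    obtain a h where ah: "p = (a,h)" by (cases p)
    obtain m k where mk: "d = (m,k)" by (cases d)
    show "rl ?L p ((\<lambda>(m,k). (m, k ())) d) = rl ?R (fst p) d"
      using ah mk by (simp add: bicom_comp_def lin_dual_def lin_bicom_def)
  qed
qed

end
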